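(* Let $\Lambda$ be a lattice with basis $B_\Lambda$; for $i=1,2$ let $Z_i$ be a lattice with orthonormal basis $B_i$ and $\iota_i:\Lambda\hookrightarrow Z_i$ a lattice embedding. Suppose that $\langle\iota_1(x),e\rangle\in\{0,1\}$ for all $x\in B_\Lambda$, $e\in B_1$; that for every $e\in B_1$ there exists $x\in B_\Lambda$ with $\langle\iota_1(x),e\rangle\neq0$; and that for $i=1,2$ the restriction map $Z_i^*\to\Lambda^*$ (via $\iota_i$) induces a surjection $r_i:\mathrm{Short}(Z_i)\to\mathrm{Short}(\Lambda)$. Then there exists a lattice embedding $\iota:Z_1\hookrightarrow Z_2$ such that $\iota_2=\iota\circ\iota_1$.
   Context: A lattice is a finitely generated free abelian group with a non-degenerate symmetric $\mathbb{Q}$-valued bilinear form; a lattice embedding is an injective homomorphism preserving the form. For an integral positive definite lattice $\Lambda$ (here $\Lambda$ embeds in $Z_1$, so it is such), $\Lambda^*=\{x\in\Lambda\otimes\mathbb{Q}:\langle x,y\rangle\in\mathbb{Z}\ \forall y\}$, $\mathrm{Char}(\Lambda)=\{\chi\in\Lambda^*:\langle\chi,y\rangle\equiv\langle y,y\rangle\pmod 2\ \forall y\in\Lambda\}$, and $\mathrm{Short}(\Lambda)$ is the set of $\chi\in\mathrm{Char}(\Lambda)$ with $\langle\chi,\chi\rangle\le\langle\chi',\chi'\rangle$ for all $\chi'\in\chi+2\Lambda$. For $Z_i$ with orthonormal basis $B_i$, $\mathrm{Short}(Z_i)$ consists of the vectors $\chi$ with $\langle\chi,e\rangle=\pm1$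 for all $e\in B_i$. *)

theory Defs
  imports Complex_Main
begin

text \<open>A lattice of rank CARD('n) with a chosen basis is modelled as the group of integer
coordinate vectors 'n \<Rightarrow> int, with the bilinear form given by a rational Gram matrix
G :: 'n \<Rightarrow> 'n \<Rightarrow> rat (w.r.t. the basis). The rational span (lattice tensor Q) is
'n \<Rightarrow> rat. A lattice with orthonormal basis has the identity Gram matrix.\<close>

definition bilQ :: "('n::finite \<Rightarrow> 'n \<Rightarrow> rat) \<Rightarrow> ('n \<Rightarrow> rat) \<Rightarrow> ('n \<Rightarrow> rat) \<Rightarrow> rat" where
  "bilQ G x y = (\<Sum>i\<in>UNIV. \<Sum>j\<in>UNIV. x i * G i j * y j)"

definition ofv :: "('n \<Rightarrow> int) \<Rightarrow> ('n \<Rightarrow> rat)" where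
  "ofv x = (\<lambda>i. of_int (x i))"

definition bil :: "('n::finite \<Rightarrow> 'n \<Rightarrow> rat) \<Rightarrow> ('n \<Rightarrow> int) \<Rightarrow> ('n \<Rightarrow> int) \<Rightarrow> rat" where
  "bil G x y = bilQ G (ofv x) (ofv y)"

definition is_lattice :: "('n::finite \<Rightarrow> 'n \<Rightarrow> rat) \<Rightarrow> bool" where
  "is_lattice G \<longleftrightarrow> (\<forall>i j. G i j = G j i) \<and>
     (\<forall>x. (\<forall>y. bil G x y = 0) \<longrightarrow> (\<forall>i. x i = 0))"

definition idG :: "'m \<Rightarrow> 'm \<Rightarrow> rat" where
  "idG i j = (if i = j then 1 else 0)"

definition lat_emb :: "('n::finite \<Rightarrow> 'n \<Rightarrow> rat) \<Rightarrow> ('m::finite \<Rightarrow> 'm \<Rightarrow> rat)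
     \<Rightarrow> (('n \<Rightarrow> int) \<Rightarrow> ('m \<Rightarrow> int)) \<Rightarrow> bool" where
  "lat_emb G H f \<longleftrightarrow> (\<forall>x y. f (\<lambda>i. x i + y i) = (\<lambda>k. f x k + f y k)) \<and> inj f \<and>
     (\<forall>x y. bil H (f x) (f y) = bil G x y)"

definition lat_dual :: "('n::finite \<Rightarrow> 'n \<Rightarrow> rat) \<Rightarrow> ('n \<Rightarrow> rat) set" where
  "lat_dual G = {x. \<forall>y. bilQ G x (ofv y) \<in> \<int>}"

definition Char :: "('n::finite \<Rightarrow> 'n \<Rightarrow> rat) \<Rightarrow> ('n \<Rightarrow> rat) set" where
  "Char G = {\<chi> \<in> lat_dual G. \<forall>y. \<exists>k::int. bilQ G \<chi> (ofv y) - bil G y y = 2 * of_int k}"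

definition Short :: "('n::finite \<Rightarrow> 'n \<Rightarrow> rat) \<Rightarrow> ('n \<Rightarrow> rat) set" where
  "Short G = {\<chi> \<in> Char G. \<forall>y. bilQ G \<chi> \<chi> \<le> bilQ G (\<lambda>i. \<chi> i + 2 * ofv y i) (\<lambda>i. \<chi> i + 2 * ofv y i)}"

text \<open>x \<in> Lambda tensor Q is the restriction (via the embedding f : Lambda \<rightarrow> Z) of
z \<in> Z tensor Q, Z with orthonormal basis: <x, y> = <z, f y> for all y in Lambda.\<close>
definition is_restr :: "('n::finite \<Rightarrow> 'n \<Rightarrow> rat) \<Rightarrow> (('n \<Rightarrow> int) \<Rightarrow> ('m::finite \<Rightarrow> int))
     \<Rightarrow> ('m \<Rightarrow> rat) \<Rightarrow> ('n \<Rightarrow> rat) \<Rightarrow> bool" where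
  "is_restr G f z x \<longleftrightarrow> (\<forall>y. bilQ G x (ofv y) = bilQ idG z (ofv (f y)))"

definition restr_short_surj :: "('n::finite \<Rightarrow> 'n \<Rightarrow> rat) \<Rightarrow> (('n \<Rightarrow> int) \<Rightarrow> ('m::finite \<Rightarrow> int)) \<Rightarrow> bool" where
  "restr_short_surj G f \<longleftrightarrow>
     (\<forall>z \<in> Short (idG :: 'm \<Rightarrow> 'm \<Rightarrow> rat). \<exists>x \<in> Short G. is_restr G f z x) \<and>
     (\<forall>x \<in> Short G. \<exists>z \<in> Short (idG :: 'm \<Rightarrow> 'm \<Rightarrow> rat). is_restr G f z x)"

definition bvec :: "'n \<Rightarrow> ('n \<Rightarrow> int)" where
  "bvec j = (\<lambda>i. if i = j then 1 else 0)"

end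

theory Submission
  imports Defs
begin

lemma bilQ_id: "bilQ idG x y = (\<Sum>i\<in>UNIV. x i * y i)"
proof -
  have "\<And>i. (\<Sum>j\<in>UNIV. x i * idG i j * y j) = x i * y i"
  proof -
    fix i
    have "(\<Sum>j\<in>UNIV. x i * idG i j * y j) = (\<Sum>j\<in>UNIV. if i = j then x i * y j else 0)"
      by (rule sum.cong) (auto simp: idG_def)
    then show "(\<Sum>j\<in>UNIV. x i * idG i j * y j) = x i * y i" by simp
  qed
  then show ?thesis unfolding bilQ_def by simp
qed

lemma bil_id: "bil idG x y = of_int (\<Sum>i\<in>UNIV. x i * y i)"
  unfolding bil_def bilQ_id ofv_def by simp

locale addh =
  fixes f :: "('n::finite \<Rightarrow> int) \<Rightarrow> ('m \<Rightarrow> int)"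
  assumes add: "\<forall>x y. f (\<lambda>i. x i + y i) = (\<lambda>k. f x k + f y k)"
begin
lemma addf: "f (\<lambda>i. x i + y i) k = f x k + f y k"
  using add by metis
lemma zero: "f (\<lambda>i. 0) k = 0"
  using addf[of "\<lambda>i. 0" "\<lambda>i. 0" k] by simp
lemma minus: "f (\<lambda>i. x i - y i) k = f x k - f y k"
  using addf[of "\<lambda>i. x i - y i" y k] by simp
lemma uminus: "f (\<lambda>i. - x i) k = - f x k"
  using minus[of "\<lambda>i. 0" x k] zero by simp
lemma nat_scal: "f (\<lambda>i. of_nat n * x i) k = of_nat n * f x k"
proof (induction n)
  case 0
  then show ?case using zero by simp
next
  case (Suc n)
  have "(\<lambda>i. of_nat (Suc n) * x i) = (\<lambda>i. (\<lambda>i. of_nat n * x i) i + x i)"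
    by (simp add: distrib_right add.commute)
  then show ?case using Suc addf by (simp add: distrib_right)
qed
lemma scal: "f (\<lambda>i. c * x i) k = c * f x k"
proof (cases "c \<ge> 0")
  case True then obtain n where "c = of_nat n" by (metis nonneg_eq_int)
  then show ?thesis using nat_scal by simp
next
  case False then obtain n where "c = - of_nat n" by (metis linorder_not_le minus_minus neg_0_less_iff_less nonneg_eq_int less_imp_le)
  then show ?thesis using nat_scal[of n x k] uminus[of "\<lambda>i. of_nat n * x i" k] by simp
qed
lemma summ: "finite A \<Longrightarrow> f (\<lambda>i. \<Sum>a\<in>A. g a i) k = (\<Sum>a\<in>A. f (g a) k)"
  by (induction A rule: finite_induct) (simp_all add: zero addf)
lemma lin: "f x k = (\<Sum>j\<in>UNIV. x j * f (bvec j) k)"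
proof -
  have "x = (\<lambda>i. \<Sum>j\<in>UNIV. x j * bvec j i)"
    by (rule ext) (simp add: bvec_def if_distrib cong: if_cong)
  then have "f x k = (\<Sum>j\<in>UNIV. f (\<lambda>i. x j * bvec j i) k)"
    using summ[of UNIV "\<lambda>j i. x j * bvec j i" k] by simp
  then show ?thesis using scal by simp
qed
end


lemma sum_upd_sq:
  fixes \<chi> :: "'m::finite \<Rightarrow> rat"
  shows "(\<Sum>i\<in>UNIV. (\<chi> i + 2 * ofv (\<lambda>i. s * bvec f i) i) * (\<chi> i + 2 * ofv (\<lambda>i. s * bvec f i) i))
       = (\<Sum>i\<in>UNIV. \<chi> i * \<chi> i) + (4 * of_int s * \<chi> f + 4 * of_int s * of_int s)"
proof -
  have "\<And>i. (\<chi> i + 2 * ofv (\<lambda>i. s * bvec f i) i) * (\<chi> i + 2 * ofv (\<lambda>i. s * bvec f i) i)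
      = \<chi> i * \<chi> i + (if i = f then 4 * of_int s * \<chi> f + 4 * of_int s * of_int s else 0)"
    by (auto simp: ofv_def bvec_def algebra_simps)
  then show ?thesis by (simp add: sum.distrib)
qed

lemma short_id_le:
  fixes \<chi> :: "'m::finite \<Rightarrow> rat"
  assumes "\<chi> \<in> Short idG"
  shows "\<bar>\<chi> f\<bar> \<le> 1"
proof -
  have m: "\<And>y. bilQ idG \<chi> \<chi> \<le> bilQ idG (\<lambda>i. \<chi> i + 2 * ofv y i) (\<lambda>i. \<chi> i + 2 * ofv y i)"
    using assms unfolding Short_def by blast
  have "0 \<le> 4 * of_int s * \<chi> f + 4 * of_int s * of_int s" for s
    using m[of "\<lambda>i. s * bvec f i"] unfolding bilQ_id sum_upd_sq by simp
  from this[of 1] this[of "-1"] show ?thesis by simp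
qed

lemma int_sq_ok: "(c::rat) = 1 \<or> c = -1 \<Longrightarrow> c * c \<le> (c + 2 * of_int y) * (c + 2 * of_int y)"
proof -
  assume c: "c = 1 \<or> c = -1"
  have "(c + 2 * of_int y) * (c + 2 * of_int y) - c * c = 4 * (of_int y * (of_int y + c))"
    by (simp add: algebra_simps)
  moreover have "0 \<le> of_int y * (of_int y + c)"
  proof (cases "y \<ge> 1")
    case True then show ?thesis using c by auto
  next
    case False
    then have "y \<le> 0" by simp
    then have "of_int y \<le> (0::rat)" by simp
    moreover have "of_int y + c \<le> 0 \<or> y = 0" using c \<open>y \<le> 0\<close> by auto
    ultimately show ?thesis by (auto intro: mult_nonpos_nonpos)
  qed
  ultimately show ?thesis by simp
qed

lemma char_ok: "(c::rat) = 1 \<or> c = -1 \<Longrightarrow> \<exists>k::int. c * of_int y - of_int (y * y) = 2 * of_int k"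
proof -
  assume c: "c = 1 \<or> c = -1"
  have e1: "even (y * (y - 1))" by (cases "even y") auto
  have e2: "even (y * (y + 1))" by (cases "even y") auto
  show ?thesis
  proof (cases "c = 1")
    case True
    from e1 obtain k where "y * (y - 1) = 2 * k" by blast
    then have "c * of_int y - of_int (y * y) = 2 * of_int (-k)"
      using True by (simp add: algebra_simps)
    then show ?thesis by blast
  next
    case False
    then have "c = -1" using c by simp
    from e2 obtain k where "y * (y + 1) = 2 * k" by blast
    then have "rat_of_int (y * (y + 1)) = rat_of_int (2 * k)" by simp
    then have h: "rat_of_int y * rat_of_int y + rat_of_int y = 2 * rat_of_int k"
      by (simp add: algebra_simps)
    have "c * of_int y - of_int (y * y) = 2 * of_int (-k)"
      using \<open>c = -1\<close> h by (simp add: algebra_simps)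
    then show ?thesis by blast
  qed
qed

lemma short_id_intro:
  fixes \<chi> :: "'m::finite \<Rightarrow> rat"
  assumes "\<forall>f. \<chi> f = 1 \<or> \<chi> f = -1"
  shows "\<chi> \<in> Short idG"
proof -
  have "\<chi> \<in> lat_dual idG"
    unfolding lat_dual_def bilQ_id ofv_def
  proof (safe)
    fix y :: "'m \<Rightarrow> int"
    show "(\<Sum>i\<in>UNIV. \<chi> i * of_int (y i)) \<in> \<int>"
      using assms by (intro Ints_sum) (metis Ints_minus Ints_of_int Ints_1 Ints_mult)
  qed
  moreover have "\<exists>k::int. bilQ idG \<chi> (ofv y) - bil idG y y = 2 * of_int k" for y
  proof -
    have "\<forall>i. \<exists>k::int. \<chi> i * of_int (y i) - of_int (y i * y i) = 2 * of_int k"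
      using assms char_ok by blast
    then obtain K where K: "\<And>i. \<chi> i * of_int (y i) - of_int (y i * y i) = 2 * of_int (K i)"
      by metis
    have "bilQ idG \<chi> (ofv y) - bil idG y y = (\<Sum>i\<in>UNIV. \<chi> i * of_int (y i) - of_int (y i * y i))"
      unfolding bilQ_id bil_id ofv_def by (simp add: sum_subtractf)
    also have "\<dots> = 2 * of_int (\<Sum>i\<in>UNIV. K i)"
      using K by (simp add: sum_distrib_left)
    finally show ?thesis by blast
  qed
  ultimately have "\<chi> \<in> Char idG" unfolding Char_def by blast
  moreover have "bilQ idG \<chi> \<chi> \<le> bilQ idG (\<lambda>i. \<chi> i + 2 * ofv y i) (\<lambda>i. \<chi> i + 2 * ofv y i)" for y
    unfolding bilQ_id ofv_def using assms int_sq_ok by (intro sum_mono) blast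
  ultimately show ?thesis unfolding Short_def by blast
qed

lemma l1_le:
  fixes G :: "'n::finite \<Rightarrow> 'n \<Rightarrow> rat"
    and f1 :: "('n \<Rightarrow> int) \<Rightarrow> ('m1::finite \<Rightarrow> int)"
    and f2 :: "('n \<Rightarrow> int) \<Rightarrow> ('m2::finite \<Rightarrow> int)"
  assumes "restr_short_surj G f1" "restr_short_surj G f2"
  shows "(\<Sum>e\<in>UNIV. \<bar>f1 x e\<bar>) \<le> (\<Sum>k\<in>UNIV. \<bar>f2 x k\<bar>)"
proof -
  define \<chi> :: "'m1 \<Rightarrow> rat" where "\<chi> = (\<lambda>e. if f1 x e \<ge> 0 then 1 else -1)"
  have "\<chi> \<in> Short idG" by (rule short_id_intro) (simp add: \<chi>_def)
  then obtain \<xi> where \<xi>: "\<xi> \<in> Short G" "is_restr G f1 \<chi> \<xi>"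
    using assms(1) unfolding restr_short_surj_def by blast
  then obtain \<chi>' :: "'m2 \<Rightarrow> rat" where \<chi>': "\<chi>' \<in> Short idG" "is_restr G f2 \<chi>' \<xi>"
    using assms(2) unfolding restr_short_surj_def by blast
  have "of_int (\<Sum>e\<in>UNIV. \<bar>f1 x e\<bar>) = bilQ idG \<chi> (ofv (f1 x))"
    unfolding bilQ_id ofv_def \<chi>_def by (simp add: of_int_sum) (rule sum.cong, auto)
  also have "\<dots> = bilQ G \<xi> (ofv x)" using \<xi>(2) unfolding is_restr_def by simp
  also have "\<dots> = bilQ idG \<chi>' (ofv (f2 x))" using \<chi>'(2) unfolding is_restr_def by simp
  also have "\<dots> \<le> (\<Sum>k\<in>UNIV. of_int \<bar>f2 x k\<bar>)"
    unfolding bilQ_id ofv_def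
  proof (rule sum_mono)
    fix k
    have "\<chi>' k * of_int (f2 x k) \<le> \<bar>\<chi>' k * of_int (f2 x k)\<bar>" by simp
    also have "\<dots> = \<bar>\<chi>' k\<bar> * of_int \<bar>f2 x k\<bar>" by (simp add: abs_mult)
    also have "\<dots> \<le> 1 * of_int \<bar>f2 x k\<bar>"
      using short_id_le[OF \<chi>'(1)] by (intro mult_right_mono) auto
    finally show "\<chi>' k * of_int (f2 x k) \<le> of_int \<bar>f2 x k\<bar>" by simp
  qed
  also have "(\<Sum>k\<in>UNIV. of_int \<bar>f2 x k\<bar>) = (of_int (\<Sum>k\<in>UNIV. \<bar>f2 x k\<bar>) :: rat)"
    by (simp add: of_int_sum)
  finally have "(of_int (\<Sum>e\<in>UNIV. \<bar>f1 x e\<bar>) :: rat) \<le> of_int (\<Sum>k\<in>UNIV. \<bar>f2 x k\<bar>)" .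
  then show ?thesis by (simp only: of_int_le_iff)
qed


lemma int_abs_sq: "(c::int) * c = \<bar>c\<bar> \<Longrightarrow> c = -1 \<or> c = 0 \<or> c = 1"
proof -
  assume h: "c * c = \<bar>c\<bar>"
  have "\<bar>c\<bar> * \<bar>c\<bar> = \<bar>c\<bar> * 1" using h by (simp add: abs_mult[symmetric])
  then have "\<bar>c\<bar> = 0 \<or> \<bar>c\<bar> = 1" by (metis mult_left_cancel)
  then show ?thesis by auto
qed

lemma int_abs_le_sq: "\<bar>c::int\<bar> \<le> c * c"
proof -
  show ?thesis
  proof (cases "c = 0")
    case False
    then have "1 \<le> \<bar>c\<bar>" by simp
    then have "\<bar>c\<bar> * 1 \<le> \<bar>c\<bar> * \<bar>c\<bar>" by (intro mult_left_mono) auto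
    then show ?thesis by simp
  qed simp
qed

lemma second_diff: "(d::int) = -1 \<or> d = 0 \<or> d = 1 \<Longrightarrow>
   \<bar>a + d\<bar> + \<bar>a - d\<bar> - 2 * \<bar>a\<bar> = (if d \<noteq> 0 \<and> a = 0 then 2 else 0)"
  by auto

lemma sum_if2: "(\<Sum>x\<in>(UNIV::'a::finite set). if P x then (2::int) else 0) = 2 * int (card {x. P x})"
  by (simp add: sum.If_cases)

definition tt :: "'n set \<Rightarrow> 'n \<Rightarrow> 'n \<Rightarrow> int" where
  "tt T0 j i = (if i = j then 1 - int (card T0) else if i \<in> T0 then 1 else int (card T0))"

lemma tt_sum:
  fixes T0 S :: "'n::finite set"
  assumes "j \<in> T0" "j \<in> S"
  shows "(\<Sum>i\<in>S. tt T0 j i) = 0 \<longleftrightarrow> S = T0"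
proof -
  have fin: "finite S" "finite T0" by auto
  have "card (S \<inter> T0) > 0" using assms fin by (auto simp: card_gt_0_iff)
  have s1: "(\<Sum>i\<in>S \<inter> T0. tt T0 j i) = int (card (S \<inter> T0)) - int (card T0)"
  proof -
    have "(\<Sum>i\<in>S \<inter> T0. tt T0 j i) = tt T0 j j + (\<Sum>i\<in>S \<inter> T0 - {j}. tt T0 j i)"
      using assms by (subst sum.remove[of _ j]) auto
    also have "(\<Sum>i\<in>S \<inter> T0 - {j}. tt T0 j i) = (\<Sum>i\<in>S \<inter> T0 - {j}. 1)"
      by (rule sum.cong) (auto simp: tt_def)
    also have "\<dots> = int (card (S \<inter> T0)) - 1"
    proof -
      have c1: "1 \<le> card (S \<inter> T0)" using \<open>card (S \<inter> T0) > 0\<close> by simp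
      have "(\<Sum>i\<in>S \<inter> T0 - {j}. (1::int)) = int (card (S \<inter> T0) - 1)"
        using assms by (simp add: card_Diff_singleton)
      then show ?thesis using of_nat_diff[OF c1] by simp
    qed
    finally show ?thesis by (simp add: tt_def)
  qed
  have s2: "(\<Sum>i\<in>S - T0. tt T0 j i) = int (card T0) * int (card (S - T0))"
  proof -
    have "(\<Sum>i\<in>S - T0. tt T0 j i) = (\<Sum>i\<in>S - T0. int (card T0))"
      using assms by (intro sum.cong) (auto simp: tt_def)
    then show ?thesis by simp
  qed
  have split: "(\<Sum>i\<in>S. tt T0 j i) = (\<Sum>i\<in>S \<inter> T0. tt T0 j i) + (\<Sum>i\<in>S - T0. tt T0 j i)"
    by (metis Diff_Diff_Int fin(1) inf_commute sum.subset_diff inf_le2 Int_lower1 sum.Int_Diff)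
  show ?thesis
  proof (cases "S - T0 = {}")
    case True
    then have "S \<subseteq> T0" by auto
    then have "S \<inter> T0 = S" by auto
    then have "(\<Sum>i\<in>S. tt T0 j i) = int (card S) - int (card T0)"
      using split s1 s2 True by simp
    moreover have "card S = card T0 \<longleftrightarrow> S = T0"
      using \<open>S \<subseteq> T0\<close> card_subset_eq fin by blast
    ultimately show ?thesis by auto
  next
    case False
    then have "card (S - T0) \<ge> 1" using fin by (simp add: Suc_leI card_gt_0_iff)
    then have "int (card T0) * 1 \<le> int (card T0) * int (card (S - T0))"
      by (intro mult_left_mono) auto
    then have "int (card T0) * int (card (S - T0)) \<ge> int (card T0)" by simp
    moreover have "card (S \<inter> T0) \<ge> 1" using \<open>card (S \<inter> T0) > 0\<close> by simp
    ultimately have "(\<Sum>i\<in>S. tt T0 j i) > 0" using split s1 s2 by simp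
    moreover have "S \<noteq> T0" using False by auto
    ultimately show ?thesis by simp
  qed
qed


lemma abs_add_eq_prod: "\<bar>a\<bar> + \<bar>b\<bar> = \<bar>a + b\<bar> \<Longrightarrow> 0 \<le> (a::int) * b"
  by (cases "a \<ge> 0"; cases "b \<ge> 0") (auto simp: mult_nonpos_nonpos)

theorem proposition2p8:
  fixes G :: "'n::finite \<Rightarrow> 'n \<Rightarrow> rat"
    and \<iota>1 :: "('n \<Rightarrow> int) \<Rightarrow> ('m1::finite \<Rightarrow> int)"
    and \<iota>2 :: "('n \<Rightarrow> int) \<Rightarrow> ('m2::finite \<Rightarrow> int)"
  assumes "is_lattice G"
    and "lat_emb G idG \<iota>1"
    and "lat_emb G idG \<iota>2"
    and "\<forall>j e. \<iota>1 (bvec j) e \<in> {0, 1}"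
    and "\<forall>e. \<exists>j. \<iota>1 (bvec j) e \<noteq> 0"
    and "restr_short_surj G \<iota>1"
    and "restr_short_surj G \<iota>2"
  shows "\<exists>\<iota> :: ('m1 \<Rightarrow> int) \<Rightarrow> ('m2 \<Rightarrow> int). lat_emb idG idG \<iota> \<and> \<iota>2 = \<iota> \<circ> \<iota>1"
proof -
  interpret h1: addh \<iota>1 using assms(2) unfolding lat_emb_def addh_def by blast
  interpret h2: addh \<iota>2 using assms(3) unfolding lat_emb_def addh_def by blast
  define d where "d = (\<lambda>e j. \<iota>1 (bvec j) e)"
  define c where "c = (\<lambda>f j. \<iota>2 (bvec j) f)"
  have lin1: "\<iota>1 x e = (\<Sum>j\<in>UNIV. x j * d e j)" for x e unfolding d_def by (rule h1.lin)
  have lin2: "\<iota>2 x f = (\<Sum>j\<in>UNIV. x j * c f j)" for x f unfolding c_def by (rule h2.lin)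
  have L1: "(\<Sum>e\<in>UNIV. \<bar>\<iota>1 x e\<bar>) = (\<Sum>f\<in>UNIV. \<bar>\<iota>2 x f\<bar>)" for x
    using l1_le[OF assms(6) assms(7), of x] l1_le[OF assms(7) assms(6), of x] by simp
  have NRM: "(\<Sum>e\<in>UNIV. \<iota>1 x e * \<iota>1 x e) = (\<Sum>f\<in>UNIV. \<iota>2 x f * \<iota>2 x f)" for x
    using assms(2,3) unfolding lat_emb_def bil_id by (metis of_int_eq_iff)
  have d01: "d e j = 0 \<or> d e j = 1" for e j using assms(4) d_def by auto
  have cvals: "c f j = -1 \<or> c f j = 0 \<or> c f j = 1" for f j
  proof -
    have "(\<Sum>f\<in>UNIV. \<bar>c f j\<bar>) = (\<Sum>e\<in>UNIV. \<bar>d e j\<bar>)"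
      using L1[of "bvec j"] c_def d_def by simp
    also have "\<dots> = (\<Sum>e\<in>UNIV. d e j * d e j)"
    proof (rule sum.cong)
      fix e show "\<bar>d e j\<bar> = d e j * d e j" using d01[of e j] by auto
    qed simp
    also have "\<dots> = (\<Sum>f\<in>UNIV. c f j * c f j)"
      using NRM[of "bvec j"] c_def d_def by simp
    finally have "(\<Sum>f\<in>UNIV. c f j * c f j - \<bar>c f j\<bar>) = 0" by (simp add: sum_subtractf)
    then have "\<forall>f\<in>UNIV. c f j * c f j - \<bar>c f j\<bar> = 0"
      by (subst (asm) sum_nonneg_eq_0_iff) (auto simp: int_abs_le_sq)
    then show ?thesis using int_abs_sq by auto
  qed
  have csign: "0 \<le> c f j * c f k" for f j k
  proof -
    have a1: "\<iota>1 (\<lambda>i. bvec j i + bvec k i) e = d e j + d e k" for e using h1.addf d_def by simp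
    have a2: "\<iota>2 (\<lambda>i. bvec j i + bvec k i) f = c f j + c f k" for f using h2.addf c_def by simp
    have "(\<Sum>f\<in>UNIV. \<bar>c f j + c f k\<bar>) = (\<Sum>e\<in>UNIV. \<bar>d e j + d e k\<bar>)"
      using L1[of "\<lambda>i. bvec j i + bvec k i"] a1 a2 by simp
    also have "\<dots> = (\<Sum>e\<in>UNIV. \<bar>d e j\<bar> + \<bar>d e k\<bar>)"
    proof (rule sum.cong)
      fix e show "\<bar>d e j + d e k\<bar> = \<bar>d e j\<bar> + \<bar>d e k\<bar>" using d01[of e j] d01[of e k] by auto
    qed simp
    also have "\<dots> = (\<Sum>e\<in>UNIV. \<bar>d e j\<bar>) + (\<Sum>e\<in>UNIV. \<bar>d e k\<bar>)" by (simp add: sum.distrib)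
    also have "\<dots> = (\<Sum>f\<in>UNIV. \<bar>c f j\<bar>) + (\<Sum>f\<in>UNIV. \<bar>c f k\<bar>)"
      using L1[of "bvec j"] L1[of "bvec k"] c_def d_def by simp
    finally have "(\<Sum>f\<in>UNIV. \<bar>c f j\<bar> + \<bar>c f k\<bar> - \<bar>c f j + c f k\<bar>) = 0"
      by (simp add: sum_subtractf sum.distrib)
    then have "\<forall>f\<in>UNIV. \<bar>c f j\<bar> + \<bar>c f k\<bar> - \<bar>c f j + c f k\<bar> = 0"
      by (subst (asm) sum_nonneg_eq_0_iff) (auto simp: abs_triangle_ineq)
    then show ?thesis using abs_add_eq_prod by auto
  qed
  define T where "T = (\<lambda>f. {j. c f j \<noteq> 0})"
  define D where "D = (\<lambda>e. {j. d e j \<noteq> 0})"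
  define \<epsilon> where "\<epsilon> = (\<lambda>f. if \<exists>j. c f j > 0 then (1::int) else -1)"
  have eps: "\<epsilon> f = 1 \<or> \<epsilon> f = -1" for f unfolding \<epsilon>_def by auto
  have cform: "c f j = (if j \<in> T f then \<epsilon> f else 0)" for f j
  proof (cases "c f j = 0")
    case False
    show ?thesis
    proof (cases "c f j = 1")
      case True
      then have "\<exists>j. 0 < c f j" by (metis zero_less_one)
      with True show ?thesis unfolding T_def \<epsilon>_def by auto
    next
      case False
      then have m: "c f j = -1" using cvals \<open>c f j \<noteq> 0\<close> by blast
      have "\<not> (c f k > 0)" for k
        using csign[of f j k] m by (auto simp: mult_less_0_iff)
      then show ?thesis using m unfolding T_def \<epsilon>_def by auto
    qed
  qed (simp add: T_def)
  have dform: "d e j = (if j \<in> D e then 1 else 0)" for e j using d01[of e j] D_def by auto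
  have Dne: "D e \<noteq> {}" for e using assms(5) D_def d_def by auto
  have cnt: "card {e. d e j \<noteq> 0 \<and> \<iota>1 t e = 0} = card {f. c f j \<noteq> 0 \<and> \<iota>2 t f = 0}" for t j
  proof -
    have p1: "(\<Sum>e\<in>UNIV. \<bar>\<iota>1 t e + d e j\<bar>) = (\<Sum>f\<in>UNIV. \<bar>\<iota>2 t f + c f j\<bar>)"
      using L1[of "\<lambda>i. t i + bvec j i"] by (simp add: h1.addf h2.addf c_def d_def)
    have p2: "(\<Sum>e\<in>UNIV. \<bar>\<iota>1 t e - d e j\<bar>) = (\<Sum>f\<in>UNIV. \<bar>\<iota>2 t f - c f j\<bar>)"
      using L1[of "\<lambda>i. t i - bvec j i"] by (simp add: h1.minus h2.minus c_def d_def)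
    have "(\<Sum>e\<in>UNIV. \<bar>\<iota>1 t e + d e j\<bar> + \<bar>\<iota>1 t e - d e j\<bar> - 2 * \<bar>\<iota>1 t e\<bar>)
        = (\<Sum>f\<in>UNIV. \<bar>\<iota>2 t f + c f j\<bar> + \<bar>\<iota>2 t f - c f j\<bar> - 2 * \<bar>\<iota>2 t f\<bar>)"
      using p1 p2 L1[of t] by (simp add: sum.distrib sum_subtractf sum_distrib_left[symmetric])
    moreover have "(\<Sum>e\<in>UNIV. \<bar>\<iota>1 t e + d e j\<bar> + \<bar>\<iota>1 t e - d e j\<bar> - 2 * \<bar>\<iota>1 t e\<bar>)
        = (\<Sum>e\<in>UNIV. if d e j \<noteq> 0 \<and> \<iota>1 t e = 0 then 2 else 0)"
    proof (rule sum.cong)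
      fix e show "\<bar>\<iota>1 t e + d e j\<bar> + \<bar>\<iota>1 t e - d e j\<bar> - 2 * \<bar>\<iota>1 t e\<bar> = (if d e j \<noteq> 0 \<and> \<iota>1 t e = 0 then 2 else 0)"
        using d01[of e j] second_diff[of "d e j" "\<iota>1 t e"] by blast
    qed simp
    moreover have "(\<Sum>f\<in>UNIV. \<bar>\<iota>2 t f + c f j\<bar> + \<bar>\<iota>2 t f - c f j\<bar> - 2 * \<bar>\<iota>2 t f\<bar>)
        = (\<Sum>f\<in>UNIV. if c f j \<noteq> 0 \<and> \<iota>2 t f = 0 then 2 else 0)"
    proof (rule sum.cong)
      fix f show "\<bar>\<iota>2 t f + c f j\<bar> + \<bar>\<iota>2 t f - c f j\<bar> - 2 * \<bar>\<iota>2 t f\<bar> = (if c f j \<noteq> 0 \<and> \<iota>2 t f = 0 then 2 else 0)"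
        using cvals[of f j] second_diff[of "c f j" "\<iota>2 t f"] by blast
    qed simp
    ultimately show ?thesis unfolding sum_if2 by simp
  qed
  have cardeq: "card {e. D e = T0} = card {f. T f = T0}" if T0ne: "T0 \<noteq> {}" for T0
  proof -
    obtain j where j: "j \<in> T0" using T0ne by blast
    define t where "t = tt T0 j"
    have i1: "\<iota>1 t e = (\<Sum>i\<in>D e. t i)" for e
    proof -
      have "\<iota>1 t e = (\<Sum>i\<in>UNIV. if i \<in> D e then t i else 0)"
        unfolding lin1 by (rule sum.cong) (auto simp: dform)
      then show ?thesis by (simp add: sum.If_cases)
    qed
    have i2: "\<iota>2 t f = \<epsilon> f * (\<Sum>i\<in>T f. t i)" for f
    proof -
      have "\<iota>2 t f = (\<Sum>i\<in>UNIV. if i \<in> T f then \<epsilon> f * t i else 0)"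
        unfolding lin2 by (rule sum.cong) (auto simp: cform[of f])
      then show ?thesis by (simp add: sum.If_cases sum_distrib_left)
    qed
    have s1: "{e. d e j \<noteq> 0 \<and> \<iota>1 t e = 0} = {e. D e = T0}"
    proof (rule Collect_cong)
      fix e
      have a: "d e j \<noteq> 0 \<longleftrightarrow> j \<in> D e" by (simp add: D_def)
      show "(d e j \<noteq> 0 \<and> \<iota>1 t e = 0) = (D e = T0)"
      proof (cases "j \<in> D e")
        case True
        then show ?thesis using a i1[of e] tt_sum[OF j True] t_def by simp
      next
        case False
        then show ?thesis using a j by auto
      qed
    qed
    have s2: "{f. c f j \<noteq> 0 \<and> \<iota>2 t f = 0} = {f. T f = T0}"
    proof (rule Collect_cong)
      fix f
      have a: "c f j \<noteq> 0 \<longleftrightarrow> j \<in> T f" by (simp add: T_def)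
      have e0: "\<epsilon> f \<noteq> 0" using eps[of f] by auto
      show "(c f j \<noteq> 0 \<and> \<iota>2 t f = 0) = (T f = T0)"
      proof (cases "j \<in> T f")
        case True
        then show ?thesis using a i2[of f] e0 tt_sum[OF j True] t_def by simp
      next
        case False
        then show ?thesis using a j by auto
      qed
    qed
    show ?thesis using cnt[of j t] s1 s2 by simp
  qed
  have "\<forall>T0. \<exists>h. T0 \<noteq> {} \<longrightarrow> bij_betw h {e. D e = T0} {f. T f = T0}"
    using cardeq finite_same_card_bij by (metis finite)
  then obtain H where H: "\<And>T0. T0 \<noteq> {} \<Longrightarrow> bij_betw (H T0) {e. D e = T0} {f. T f = T0}"
    by metis
  define \<sigma> where "\<sigma> = (\<lambda>e. H (D e) e)"
  have sT: "T (\<sigma> e) = D e" for e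
    using bij_betw_apply[OF H[OF Dne[of e]], of e] \<sigma>_def by simp
  have inj\<sigma>: "inj \<sigma>"
  proof (rule injI)
    fix a b assume ab: "\<sigma> a = \<sigma> b"
    then have "D a = D b" using sT by metis
    then have "b \<in> {e. D e = D a}" by simp
    moreover have "a \<in> {e. D e = D a}" by simp
    moreover have "H (D a) a = H (D a) b" using ab \<open>D a = D b\<close> \<sigma>_def by simp
    ultimately show "a = b" using H[OF Dne[of a]] unfolding bij_betw_def inj_on_def by blast
  qed
  have surj\<sigma>: "f \<in> range \<sigma>" if "T f \<noteq> {}" for f
  proof -
    have "f \<in> H (T f) ` {e. D e = T f}" using H[OF that] unfolding bij_betw_def by auto
    then obtain e where "D e = T f" "f = H (T f) e" by auto
    then have "f = \<sigma> e" using \<sigma>_def by simp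
    then show ?thesis by simp
  qed
  define \<iota> :: "('m1 \<Rightarrow> int) \<Rightarrow> ('m2 \<Rightarrow> int)" where
    "\<iota> = (\<lambda>z f. if f \<in> range \<sigma> then \<epsilon> f * z (inv \<sigma> f) else 0)"
  have \<iota>\<sigma>: "\<iota> z (\<sigma> e) = \<epsilon> (\<sigma> e) * z e" for z e
    unfolding \<iota>_def using inj\<sigma> by simp
  have add: "\<forall>x y. \<iota> (\<lambda>i. x i + y i) = (\<lambda>k. \<iota> x k + \<iota> y k)"
    unfolding \<iota>_def by (auto simp: distrib_left)
  have inj: "inj \<iota>"
  proof (rule injI)
    fix z w assume "\<iota> z = \<iota> w"
    then have "\<epsilon> (\<sigma> e) * z e = \<epsilon> (\<sigma> e) * w e" for e using \<iota>\<sigma> by metis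
    then show "z = w" using eps by (auto intro!: ext) (metis mult_cancel_left zero_neq_neg_one zero_neq_one)
  qed
  have bil: "bil idG (\<iota> z) (\<iota> w) = bil idG z w" for z w
  proof -
    have "(\<Sum>f\<in>UNIV. \<iota> z f * \<iota> w f) = (\<Sum>f\<in>UNIV. if f \<in> range \<sigma> then z (inv \<sigma> f) * w (inv \<sigma> f) else 0)"
    proof (rule sum.cong)
      fix f
      have "\<epsilon> f * \<epsilon> f = 1" using eps[of f] by auto
      then show "\<iota> z f * \<iota> w f = (if f \<in> range \<sigma> then z (inv \<sigma> f) * w (inv \<sigma> f) else 0)"
        unfolding \<iota>_def by (auto simp: algebra_simps)
    qed simp
    also have "\<dots> = (\<Sum>f\<in>range \<sigma>. z (inv \<sigma> f) * w (inv \<sigma> f))"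
      by (simp add: sum.If_cases)
    also have "\<dots> = (\<Sum>e\<in>UNIV. z e * w e)"
      using inj\<sigma> by (simp add: sum.reindex)
    finally show ?thesis unfolding bil_id by simp
  qed
  have comp: "\<iota>2 = \<iota> \<circ> \<iota>1"
  proof (rule ext, rule ext)
    fix x f
    show "\<iota>2 x f = (\<iota> \<circ> \<iota>1) x f"
    proof (cases "f \<in> range \<sigma>")
      case True
      then obtain e where fe: "f = \<sigma> e" by auto
      have "\<iota>2 x f = (\<Sum>j\<in>UNIV. x j * c f j)" by (rule lin2)
      also have "\<dots> = (\<Sum>j\<in>UNIV. \<epsilon> f * (x j * d e j))"
      proof (rule sum.cong)
        fix j
        have cf: "c f j = (if j \<in> D e then \<epsilon> f else 0)" using cform[of f j] sT[of e] fe by simp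
        show "x j * c f j = \<epsilon> f * (x j * d e j)" using cf dform[of e j] by simp
      qed simp
      also have "\<dots> = \<epsilon> f * \<iota>1 x e" by (simp add: lin1 sum_distrib_left)
      also have "\<dots> = \<iota> (\<iota>1 x) f" using \<iota>\<sigma> fe by simp
      finally show ?thesis by simp
    next
      case False
      then have "T f = {}" using surj\<sigma> by blast
      then have "c f j = 0" for j using cform[of f j] by simp
      then have "\<iota>2 x f = 0" by (simp add: lin2)
      then show ?thesis using False \<iota>_def by simp
    qed
  qed
  show ?thesis using add inj bil comp unfolding lat_emb_def by blast
qed

end
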